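(* Let $m\ge3$ be odd and let $\bm d=(d_1,d_2,d_3)\in\mathcal{S}_1^3$, i.e. each $d_i$ is odd and squarefree. Then $\theta(O^+(X^{\bm d}_2))=\mathbb{Z}_2(\mathbb{Q}_2^\times)^2$, where $\mathbb{Z}_2(\mathbb{Q}_2^\times)^2$ denotes the set $\{as^2: a\in\mathbb{Z}_2\setminus\{0\},\ s\in\mathbb{Q}_2^\times\}$.
   Context: $V$ is the positive definite ternary quadratic space over $\mathbb{Q}$ with basis $e_1,e_2,e_3$ and bilinear form $B(e_i,e_j)=4(m-2)^2\delta_{ij}$, $Q(x)=B(x,x)$. For $\bm d\in\mathbb{N}^3$, $L^{\bm d}=\mathbb{Z}d_1e_1+\mathbb{Z}d_2e_2+\mathbb{Z}d_3e_3$, $\nu=\frac{4-m}{2(m-2)}(e_1+e_2+e_3)$ and $X^{\bm d}=L^{\bm d}+\nu$. $V_2=V\otimes\mathbb{Q}_2$, $X^{\bm d}_2=L^{\bm d}\otimes\mathbb{Z}_2+\nu$, $O^+(X^{\bm d}_2)=\{\sigma\in O^+(V_2):\sigma(X^{\bm d}_2)=X^{\bm d}_2\}$, and $\theta$ is the spinor norm $O^+(V_2)\to\mathbb{Q}_2^\times/(\mathbb{Q}_2^\times)^2$, with $\theta(O^+(X^{\bm d}_2))$ identified with its preimage in $\mathbb{Q}_2^\times$. *)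

theory Defs
  imports "HOL-Analysis.Analysis" "HOL-Computational_Algebra.Squarefree"
begin

text \<open>We characterise Q_2 as a field of characteristic 0
  carrying a discrete valuation v (v x is only meaningful for x nonzero) such that
  v 2 = 1 (2 is a uniformiser), the residue field is F_2, and the field is complete.
  Every such field is isomorphic to Q_2 (every element is a convergent 2-adic expansion),
  and Q_2 with the 2-adic valuation is such a field.\<close>

definition vclose :: "('k::field \<Rightarrow> int) \<Rightarrow> int \<Rightarrow> 'k \<Rightarrow> 'k \<Rightarrow> bool" where
  "vclose v n x y \<longleftrightarrow> x = y \<or> v (x - y) \<ge> n"

definition Q2_model :: "('k::field_char_0 \<Rightarrow> int) \<Rightarrow> bool" where
  "Q2_model v \<longleftrightarrow>
     (\<forall>x y. x \<noteq> 0 \<longrightarrow> y \<noteq> 0 \<longrightarrow> v (x * y) = v x + v y) \<and>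
     (\<forall>x y. x \<noteq> 0 \<longrightarrow> y \<noteq> 0 \<longrightarrow> x + y \<noteq> 0 \<longrightarrow> v (x + y) \<ge> min (v x) (v y)) \<and>
     v 2 = 1 \<and>
     (\<forall>x. x \<noteq> 0 \<longrightarrow> v x \<ge> 0 \<longrightarrow> vclose v 1 x 0 \<or> vclose v 1 x 1) \<and>
     (\<forall>f :: nat \<Rightarrow> 'k.
        (\<forall>n. \<exists>N. \<forall>i\<ge>N. \<forall>j\<ge>N. vclose v n (f i) (f j)) \<longrightarrow>
        (\<exists>L. \<forall>n. \<exists>N. \<forall>i\<ge>N. vclose v n (f i) L))"

definition Z2 :: "('k::field_char_0 \<Rightarrow> int) \<Rightarrow> 'k set" where
  "Z2 v = {a. a = 0 \<or> v a \<ge> 0}"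

text \<open>Vectors are coordinate vectors w.r.t. e_1,e_2,e_3; B(e_i,e_j) = 4(m-2)^2 delta_ij.\<close>

definition Bm :: "nat \<Rightarrow> 'k::field_char_0 ^ 3 \<Rightarrow> 'k ^ 3 \<Rightarrow> 'k" where
  "Bm m x y = 4 * (of_nat m - 2)^2 * (\<Sum>i\<in>UNIV. x $ i * y $ i)"

definition Qm :: "nat \<Rightarrow> 'k::field_char_0 ^ 3 \<Rightarrow> 'k" where
  "Qm m x = Bm m x x"

text \<open>Matrix of the reflection tau_v(x) = x - (2 B(x,v)/Q(v)) v (for Q(v) nonzero).\<close>
definition refl_mat :: "nat \<Rightarrow> 'k::field_char_0 ^ 3 \<Rightarrow> 'k ^ 3 ^ 3" where
  "refl_mat m u = (\<chi> i j. (if i = j then 1 else 0) - 2 * Bm m (axis j 1) u / Qm m u * u $ i)"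

definition Oplus :: "nat \<Rightarrow> ('k::field_char_0 ^ 3 ^ 3) set" where
  "Oplus m = {A. (\<forall>x y. Bm m (A *v x) (A *v y) = Bm m x y) \<and> det A = 1}"

definition nu :: "nat \<Rightarrow> 'k::field_char_0 ^ 3" where
  "nu m = (\<chi> i. (4 - of_nat m) / (2 * (of_nat m - 2)))"

definition X2 :: "('k::field_char_0 \<Rightarrow> int) \<Rightarrow> nat \<Rightarrow> (3 \<Rightarrow> nat) \<Rightarrow> ('k ^ 3) set" where
  "X2 v m d = {x. \<exists>a. (\<forall>i. a i \<in> Z2 v) \<and> x = (\<chi> i. of_nat (d i) * a i) + nu m}"

definition Oplus_X :: "('k::field_char_0 \<Rightarrow> int) \<Rightarrow> nat \<Rightarrow> (3 \<Rightarrow> nat) \<Rightarrow> ('k ^ 3 ^ 3) set" where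
  "Oplus_X v m d = {A \<in> Oplus m. (\<lambda>x. A *v x) ` X2 v m d = X2 v m d}"

text \<open>theta(sigma) = Q(v_1)...Q(v_r) (Q_2^*)^2 whenever sigma = tau_{v_1} ... tau_{v_r}
  with anisotropic v_i. The preimage in Q_2^* of theta(S) for a set S of rotations is
  therefore the following set.\<close>
definition spinor_norm_preimage :: "nat \<Rightarrow> ('k::field_char_0 ^ 3 ^ 3) set \<Rightarrow> 'k set" where
  "spinor_norm_preimage m S =
     {q. \<exists>A\<in>S. \<exists>us :: ('k ^ 3) list. \<exists>s.
           (\<forall>u\<in>set us. Qm m u \<noteq> 0) \<and>
           A = foldr (\<lambda>u M. refl_mat m u ** M) us (mat 1) \<and>
           s \<noteq> 0 \<and> q = (\<Prod>u\<leftarrow>us. Qm m u) * s^2}"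

definition squarefree_odd :: "nat \<Rightarrow> bool" where
  "squarefree_odd n \<longleftrightarrow> odd n \<and> squarefree n"

end

theory Submission
  imports Defs
begin



locale q2m = fixes v :: "'k::field_char_0 \<Rightarrow> int" assumes Q2: "Q2_model v"
begin

lemma vmult: "x \<noteq> 0 \<Longrightarrow> y \<noteq> 0 \<Longrightarrow> v (x * y) = v x + v y"
  using Q2[unfolded Q2_model_def, THEN conjunct1] by blast
lemma vadd: "x \<noteq> 0 \<Longrightarrow> y \<noteq> 0 \<Longrightarrow> x + y \<noteq> 0 \<Longrightarrow> v (x + y) \<ge> min (v x) (v y)"
  using Q2[unfolded Q2_model_def, THEN conjunct2, THEN conjunct1] by blast
lemma v2: "v 2 = 1" using Q2[unfolded Q2_model_def, THEN conjunct2, THEN conjunct2, THEN conjunct1] by blast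
lemma vres: "x \<noteq> 0 \<Longrightarrow> v x \<ge> 0 \<Longrightarrow> vclose v 1 x 0 \<or> vclose v 1 x 1"
  using Q2[unfolded Q2_model_def, THEN conjunct2, THEN conjunct2, THEN conjunct2, THEN conjunct1] by blast
lemma vcomplete: fixes f :: "nat \<Rightarrow> 'k" shows "(\<forall>n. \<exists>N. \<forall>i\<ge>N. \<forall>j\<ge>N. vclose v n (f i) (f j)) \<Longrightarrow>
        (\<exists>L. \<forall>n. \<exists>N. \<forall>i\<ge>N. vclose v n (f i) L)"
  using Q2[unfolded Q2_model_def, THEN conjunct2, THEN conjunct2, THEN conjunct2, THEN conjunct2] by blast

lemma v1: "v 1 = 0" using vmult[of 1 1] by simp

lemma vinv: "x \<noteq> 0 \<Longrightarrow> v (inverse x) = - v x"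
  using vmult[of x "inverse x"] v1 by simp

lemma vdiv: "x \<noteq> 0 \<Longrightarrow> y \<noteq> 0 \<Longrightarrow> v (x / y) = v x - v y"
  using vmult[of x "inverse y"] vinv[of y] by (simp add: divide_inverse)

lemma vneg1: "v (-1) = 0"
  using vmult[of "-1" "-1"] v1 by simp

lemma vneg: "v (- x) = v x"
proof (cases "x = 0")
  case False thus ?thesis using vmult[of "-1" x] vneg1 by simp
qed simp

lemma vpow2: "v (2 ^ n) = int n"
  by (induction n) (auto simp: v1 vmult v2)

lemma vsub_sym: "v (x - y) = v (y - x)"
  using vneg[of "x - y"] by simp

lemma vstrict: assumes "x \<noteq> 0" "y \<noteq> 0" "v x < v y" shows "x + y \<noteq> 0" "v (x + y) = v x"
proof -
  show xy: "x + y \<noteq> 0" proof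
    assume "x + y = 0" then have "y = - x" by (metis add.commute eq_neg_iff_add_eq_0)
    then show False using assms vneg by simp
  qed
  have "v (x + y) \<ge> v x" using vadd[OF assms(1,2) xy] assms by simp
  moreover have "v x \<ge> min (v (x + y)) (v (-y))"
    using vadd[OF xy _ , of "-y"] assms by simp
  ultimately show "v (x + y) = v x" using assms vneg by (auto simp: min_def split: if_splits)
qed

lemma vnat: "v (of_nat n) \<ge> 0" if "n > 0"
  using that
proof (induction n)
  case (Suc n)
  show ?case proof (cases "n = 0")
    case True then show ?thesis by (simp add: v1)
  next
    case False
    have ne: "(of_nat n + 1 :: 'k) \<noteq> 0" using of_nat_neq_0[of n] by (simp add: add.commute)
    have "v (of_nat n + 1) \<ge> min (v (of_nat n)) (v 1)"
      using False ne by (intro vadd) auto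
    then show ?thesis using Suc False v1 by (simp add: add.commute)
  qed
qed simp

lemma vint: "v (of_int n) \<ge> 0" if "n \<noteq> 0"
proof (cases "n \<ge> 0")
  case True
  then have "(of_int n :: 'k) = of_nat (nat n)" by simp
  moreover have "nat n > 0" using True that by simp
  ultimately show ?thesis using vnat[of "nat n"] by simp
next
  case False
  then have e: "(of_int n :: 'k) = - of_nat (nat (-n))" by simp
  have "nat (-n) > 0" using False by simp
  then have "v (of_nat (nat (-n)) :: 'k) \<ge> 0" by (rule vnat)
  then show ?thesis unfolding e vneg .
qed

lemma vodd: "v (of_int n) = 0" if "odd n"
proof -
  from that obtain k where k: "n = 2 * k + 1" by (rule oddE)
  show ?thesis proof (cases "k = 0")
    case True then show ?thesis using k v1 by simp
  next
    case False
    have e: "(of_int (2 * k) :: 'k) = 2 * of_int k" by simp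
    have "v (2 * (of_int k :: 'k)) = v 2 + v (of_int k)" using False by (intro vmult) auto
    then have "v (of_int (2 * k) :: 'k) = 1 + v (of_int k)" using v2 e by simp
    then have lt: "v (1::'k) < v (of_int (2*k))" using vint[OF False] v1 by simp
    have ne: "(of_int (2*k) :: 'k) \<noteq> 0" using False by simp
    have "v (1 + of_int (2*k)) = v (1::'k)" using vstrict(2)[OF _ ne lt] by simp
    moreover have "(of_int n :: 'k) = 1 + of_int (2*k)" using k by simp
    ultimately show ?thesis using v1 by simp
  qed
qed

lemma Z2_iff: "x \<in> Z2 v \<longleftrightarrow> x = 0 \<or> v x \<ge> 0" by (simp add: Z2_def)

lemma Z2_add: "x \<in> Z2 v \<Longrightarrow> y \<in> Z2 v \<Longrightarrow> x + y \<in> Z2 v"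
  unfolding Z2_iff using vadd[of x y] by fastforce
lemma Z2_mult: "x \<in> Z2 v \<Longrightarrow> y \<in> Z2 v \<Longrightarrow> x * y \<in> Z2 v"
  unfolding Z2_iff using vmult[of x y] by fastforce
lemma Z2_neg: "x \<in> Z2 v \<Longrightarrow> - x \<in> Z2 v"
  unfolding Z2_iff using vneg[of x] by auto
lemma Z2_diff: "x \<in> Z2 v \<Longrightarrow> y \<in> Z2 v \<Longrightarrow> x - y \<in> Z2 v"
  using Z2_add[of x "-y"] Z2_neg[of y] by simp
lemma Z2_int: "of_int n \<in> Z2 v"
  unfolding Z2_iff using vint[of n] by auto
lemma Z2_nat: "of_nat n \<in> Z2 v"
  using Z2_int[of "int n"] by simp
lemma Z2_odd_div: assumes "odd b" "x \<in> Z2 v" shows "x / of_int b \<in> Z2 v"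
proof (cases "x = 0")
  case True then show ?thesis by (simp add: Z2_iff)
next
  case False
  have b: "b \<noteq> 0" using assms by auto
  have "v (x / of_int b) = v x" using vdiv[of x "of_int b"] vodd[OF assms(1)] False b by simp
  then show ?thesis using assms(2) False unfolding Z2_iff by simp
qed
lemma Z2_frac: "odd p \<Longrightarrow> b \<noteq> 0 \<Longrightarrow> b dvd a * p \<Longrightarrow> of_int a / of_int b \<in> Z2 v"
proof -
  assume p: "odd p" and b: "b \<noteq> 0" and d: "b dvd a * p"
  then obtain k where k: "a * p = b * k" by blast
  have "p \<noteq> 0" using p by auto
  then have "(of_int a / of_int b :: 'k) = of_int k / of_int p"
  proof -
    have "(of_int a * of_int p :: 'k) = of_int k * of_int b"
      using arg_cong[OF k, of "of_int :: int \<Rightarrow> 'k"] by (simp add: mult.commute)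
    then show ?thesis using b \<open>p \<noteq> 0\<close> by (simp add: frac_eq_eq)
  qed
  then show ?thesis using Z2_odd_div[OF p Z2_int] by simp
qed

end


context q2m begin

lemma vclose_sym: "vclose v n x y \<Longrightarrow> vclose v n y x"
  unfolding vclose_def using vsub_sym by metis

lemma vclose_trans: assumes "vclose v n x y" "vclose v n y z" shows "vclose v n x z"
proof -
  consider "x = y" | "y = z" | "x \<noteq> y" "y \<noteq> z" "v (x - y) \<ge> n" "v (y - z) \<ge> n"
    using assms unfolding vclose_def by blast
  then show ?thesis
  proof cases
    case 3
    show ?thesis proof (cases "x = z")
      case False
      have "v ((x - y) + (y - z)) \<ge> min (v (x - y)) (v (y - z))"
        using 3 False by (intro vadd) auto
      then show ?thesis using 3 unfolding vclose_def by (auto simp: min_def split: if_splits)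
    qed (simp add: vclose_def)
  qed (use assms in auto)
qed

lemma vclose_mono: "vclose v n x y \<Longrightarrow> m \<le> n \<Longrightarrow> vclose v m x y"
  unfolding vclose_def by auto

lemma digit: assumes "y \<in> Z2 v" shows "\<exists>b y'. (b = 0 \<or> b = 1) \<and> y' \<in> Z2 v \<and> y = b + 2 * y'"
proof (cases "y = 0")
  case True
  have "y = 0 + 2 * 0" "(0::'k) \<in> Z2 v" using True by (auto simp: Z2_iff)
  then show ?thesis by blast
next
  case False
  then have vy: "v y \<ge> 0" using assms by (simp add: Z2_iff)
  from vres[OF False vy] show ?thesis
  proof
    assume "vclose v 1 y 0"
    then have "v y \<ge> 1" using False by (simp add: vclose_def)
    moreover have "v (y / 2) = v y - 1" using vdiv[of y 2] False v2 by simp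
    ultimately have "y / 2 \<in> Z2 v" by (simp add: Z2_iff)
    moreover have "y = 0 + 2 * (y / 2)" by simp
    ultimately show ?thesis by blast
  next
    assume c: "vclose v 1 y 1"
    show ?thesis proof (cases "y = 1")
      case True
      have "y = 1 + 2 * 0" "(0::'k) \<in> Z2 v" using True by (auto simp: Z2_iff)
      then show ?thesis by blast
    next
      case F: False
      then have "v (y - 1) \<ge> 1" using c by (simp add: vclose_def)
      moreover have "v ((y - 1) / 2) = v (y - 1) - 1" using vdiv[of "y - 1" 2] F v2 by simp
      ultimately have "(y - 1) / 2 \<in> Z2 v" by (simp add: Z2_iff)
      moreover have "y = 1 + 2 * ((y - 1) / 2)" by (simp add: field_simps)
      ultimately show ?thesis by blast
    qed
  qed
qed

lemma unit_mod8: assumes "w \<noteq> 0" "v w = 0"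
  shows "\<exists>r t. (r = 1 \<or> r = 3 \<or> r = 5 \<or> r = (7::int)) \<and> t \<in> Z2 v \<and> w = of_int r + 8 * t"
proof -
  have w: "w \<in> Z2 v" using assms by (simp add: Z2_iff)
  obtain b0 y1 where 0: "b0 = 0 \<or> b0 = 1" "y1 \<in> Z2 v" "w = b0 + 2 * y1" using digit[OF w] by blast
  obtain b1 y2 where 1: "b1 = 0 \<or> b1 = 1" "y2 \<in> Z2 v" "y1 = b1 + 2 * y2" using digit[OF 0(2)] by blast
  obtain b2 t where 2: "b2 = 0 \<or> b2 = 1" "t \<in> Z2 v" "y2 = b2 + 2 * t" using digit[OF 1(2)] by blast
  have "b0 = 1"
  proof (rule ccontr)
    assume "b0 \<noteq> 1" then have "w = 2 * y1" using 0 by simp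
    then have "y1 \<noteq> 0" "v w = 1 + v y1" using assms vmult[of 2 y1] v2 by auto
    then show False using 0(2) assms by (simp add: Z2_iff)
  qed
  then have "w = 1 + 2 * b1 + 4 * b2 + 8 * t" using 0 1 2 by (simp add: algebra_simps)
  then show ?thesis using 1(1) 2(1) 2(2)
    by (intro exI[of _ "1 + 2 * (if b1 = 0 then 0 else 1) + 4 * (if b2 = 0 then 0 else 1)"] exI[of _ t]) auto
qed

definition fz :: "'k \<Rightarrow> 'k \<Rightarrow> 'k" where "fz t z = t - 2 * z^2"

lemma fz_Z2: "t \<in> Z2 v \<Longrightarrow> z \<in> Z2 v \<Longrightarrow> fz t z \<in> Z2 v"
  unfolding fz_def power2_eq_square by (intro Z2_diff Z2_mult Z2_int[of 2, simplified]) auto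

lemma fz_contract: assumes "x \<in> Z2 v" "y \<in> Z2 v" "vclose v n x y"
  shows "vclose v (n + 1) (fz t x) (fz t y)"
proof (cases "x = y \<or> x + y = 0")
  case True
  then have "fz t x = fz t y" unfolding fz_def
    by (metis add.commute add_eq_0_iff power2_minus)
  then show ?thesis by (simp add: vclose_def)
next
  case False
  then have d: "x - y \<noteq> 0" "x + y \<noteq> 0" by auto
  have e: "fz t x - fz t y = - (2 * ((x - y) * (x + y)))" unfolding fz_def by (simp add: algebra_simps power2_eq_square)
  have "v (fz t x - fz t y) = v 2 + (v (x - y) + v (x + y))"
    unfolding e vneg using d by (simp add: vmult)
  moreover have "v (2::'k) = 1" using v2 by simp
  moreover have "v (x - y) \<ge> n" using assms(3) d by (simp add: vclose_def)
  moreover have "v (x + y) \<ge> 0" using Z2_add[OF assms(1,2)] d by (simp add: Z2_iff)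
  ultimately show ?thesis by (simp add: vclose_def)
qed

lemma sqrt_1_8: assumes t: "t \<in> Z2 v" shows "\<exists>y. y \<noteq> 0 \<and> y^2 = 1 + 8 * t"
proof -
  define zs where "zs n = (fz t ^^ n) 0" for n
  have zs_S: "zs (Suc n) = fz t (zs n)" for n by (simp add: zs_def)
  have zZ: "zs n \<in> Z2 v" for n
    by (induction n) (auto simp: zs_S fz_Z2[OF t], simp add: zs_def Z2_iff)
  have step: "vclose v (int n) (zs (Suc n)) (zs n)" for n
  proof (induction n)
    case 0
    have "zs 1 = t" by (simp add: zs_def fz_def)
    then show ?case using t by (simp add: vclose_def Z2_iff zs_def)
  next
    case (Suc n)
    show ?case using fz_contract[OF zZ zZ Suc, of t] by (simp add: zs_S ac_simps)
  qed
  have far: "vclose v (int N) (zs i) (zs N)" if "i \<ge> N" for i N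
    using that
  proof (induction i)
    case 0 then show ?case by (simp add: vclose_def)
  next
    case (Suc i)
    show ?case proof (cases "Suc i = N")
      case True then show ?thesis by (simp add: vclose_def)
    next
      case False
      then have "i \<ge> N" using Suc by simp
      then show ?thesis using Suc vclose_trans vclose_mono[OF step[of i], of N] by auto
    qed
  qed
  have "\<forall>n. \<exists>N. \<forall>i\<ge>N. \<forall>j\<ge>N. vclose v n (zs i) (zs j)"
  proof
    fix n :: int
    show "\<exists>N. \<forall>i\<ge>N. \<forall>j\<ge>N. vclose v n (zs i) (zs j)"
    proof (intro exI[of _ "nat n"] allI impI)
      fix i j assume "i \<ge> nat n" "j \<ge> nat n"
      then have "vclose v (int (nat n)) (zs i) (zs j)"
        using far vclose_trans vclose_sym by metis
      then show "vclose v n (zs i) (zs j)" by (rule vclose_mono) simp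
    qed
  qed
  then obtain L where L: "\<forall>n. \<exists>N. \<forall>i\<ge>N. vclose v n (zs i) L" using vcomplete by blast
  have LZ: "L \<in> Z2 v"
  proof -
    obtain N where "\<forall>i\<ge>N. vclose v 0 (zs i) L" using L by blast
    then have c: "vclose v 0 (zs N) L" by simp
    have "L = zs N - (zs N - L)" by simp
    moreover have "zs N - L \<in> Z2 v" using c by (auto simp: vclose_def Z2_iff)
    ultimately show ?thesis using Z2_diff[OF zZ] by metis
  qed
  have cl: "vclose v (int n) L (fz t L)" for n
  proof -
    obtain N where N: "\<forall>i\<ge>N. vclose v (int n) (zs i) L" using L by blast
    have "vclose v (int n + 1) (fz t (zs N)) (fz t L)"
      using fz_contract[OF zZ LZ, of "int n" N t] N by simp
    then have a: "vclose v (int n) (zs (Suc N)) (fz t L)" by (simp add: zs_S vclose_mono)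
    have "vclose v (int n) L (zs (Suc N))" using N vclose_sym by simp
    then show ?thesis using a vclose_trans by blast
  qed
  have fixL: "fz t L = L"
  proof (rule ccontr)
    assume ne: "fz t L \<noteq> L"
    have "vclose v (int (nat (v (L - fz t L)) + 1)) L (fz t L)" by (rule cl)
    then show False using ne by (simp add: vclose_def split: if_splits)
  qed
  have y2: "(1 + 4 * L)^2 = 1 + 8 * t"
  proof -
    have "t = L + 2 * L^2" using fixL unfolding fz_def by (simp add: algebra_simps)
    then show ?thesis by (simp add: algebra_simps power2_eq_square)
  qed
  have "1 + 4 * L \<noteq> 0"
  proof
    assume h: "1 + 4 * L = 0"
    then have Lne: "L \<noteq> 0" by auto
    have "(4::'k) = 2 * 2" by simp
    then have "v (4::'k) = 2" using vmult[of "2::'k" 2] v2 by simp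
    then have "v (4 * L) = 2 + v L" using vmult[of 4 L] Lne by simp
    moreover have "4 * L = -1" using h by (simp add: algebra_simps eq_neg_iff_add_eq_0)
    ultimately show False using vneg1 LZ Lne by (simp add: Z2_iff)
  qed
  then show ?thesis using y2 by blast
qed

end


context q2m begin

lemma unit_class: assumes "w \<noteq> 0" "v w = 0"
  shows "\<exists>r y. (r = 1 \<or> r = 3 \<or> r = 5 \<or> r = (7::int)) \<and> y \<noteq> 0 \<and> w = of_int r * y^2"
proof -
  obtain r t where rt: "r = 1 \<or> r = 3 \<or> r = 5 \<or> r = (7::int)" "t \<in> Z2 v" "w = of_int r + 8 * t"
    using unit_mod8[OF assms] by blast
  have odd: "odd r" using rt(1) by auto
  then have r0: "(of_int r :: 'k) \<noteq> 0" by (metis odd_of_bool_self of_bool_eq(1) of_int_eq_0_iff)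
  have "t / of_int r \<in> Z2 v" by (rule Z2_odd_div[OF odd rt(2)])
  then obtain y where y: "y \<noteq> 0" "y^2 = 1 + 8 * (t / of_int r)" using sqrt_1_8 by blast
  have "w = of_int r * y^2" unfolding y(2) rt(3) using r0 by (simp add: field_simps)
  then show ?thesis using rt(1) y(1) by blast
qed

lemma classify: fixes x :: 'k assumes "x \<noteq> 0"
  shows "\<exists>c y. c \<in> {1,2,3,5,6,7,10,14::int} \<and> y \<noteq> 0 \<and> x = of_int c * y^2"
proof -
  define N where "N = nat (- v x)"
  define x' where "x' = x * 2 ^ (2 * N)"
  have x'0: "x' \<noteq> 0" using assms by (simp add: x'_def)
  have "v x' = v x + int (2 * N)" unfolding x'_def using assms by (simp add: vmult vpow2)
  then have vx': "v x' \<ge> 0" unfolding N_def by simp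
  define k where "k = nat (v x')"
  define w where "w = x' / 2 ^ k"
  have w0: "w \<noteq> 0" using x'0 by (simp add: w_def)
  have "v w = v x' - int k" unfolding w_def using x'0 by (simp add: vdiv vpow2)
  then have vw: "v w = 0" using vx' by (simp add: k_def)
  obtain r y where ry: "r = 1 \<or> r = 3 \<or> r = 5 \<or> r = (7::int)" "y \<noteq> 0" "w = of_int r * y^2"
    using unit_class[OF w0 vw] by blast
  define e where "e = k mod 2"
  define j where "j = k div 2"
  have k: "k = e + 2 * j" unfolding e_def j_def by simp
  have "x = x' / 2 ^ (2 * N)" unfolding x'_def by simp
  also have "x' = 2 ^ k * w" unfolding w_def by simp
  also have "(2::'k) ^ k = 2 ^ e * (2 ^ j)^2" unfolding k by (simp add: power_add power_mult power2_eq_square mult_ac)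
  finally have "x = of_int (2 ^ e * r) * (y * 2 ^ j / 2 ^ N)^2"
    unfolding ry(3) by (simp add: power_mult_distrib power_divide power_mult field_simps)
  moreover have "2 ^ e * r \<in> {1,2,3,5,6,7,10,14::int}"
  proof -
    have "e = 0 \<or> e = 1" unfolding e_def by auto
    then show ?thesis using ry(1) by auto
  qed
  moreover have "y * 2 ^ j / 2 ^ N \<noteq> 0" using ry(2) by simp
  ultimately show ?thesis by blast
qed

end



definition dot3 :: "'k::field_char_0 ^ 3 \<Rightarrow> 'k ^ 3 \<Rightarrow> 'k" where
  "dot3 x y = x$1*y$1 + x$2*y$2 + x$3*y$3"

lemma Bm3: "Bm m x y = 4 * (of_nat m - 2)^2 * dot3 x y"
  by (simp add: Bm_def sum_3 dot3_def)

lemma Bm_axis: "Bm m (axis j 1) u = 4 * (of_nat m - 2)^2 * u$j"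
  unfolding Bm_def axis_def using exhaust_3[of j] by (auto simp: sum_3)

lemma Qm3: "Qm m u = 4 * (of_nat m - 2)^2 * dot3 u u"
  by (simp add: Qm_def Bm3)

lemma Qm_ne: "of_nat m \<noteq> (2::'k::field_char_0) \<Longrightarrow> dot3 u u \<noteq> 0 \<Longrightarrow> Qm m (u::'k^3) \<noteq> 0"
  by (simp add: Qm3)

lemma dot3_sym: "dot3 x y = dot3 y x" by (simp add: dot3_def mult.commute)

lemma dot3_expand: "dot3 (x - t *s u) (y - r *s u) = dot3 x y - r * dot3 x u - t * dot3 u y + t * r * dot3 u u"
  by (simp add: dot3_def algebra_simps)

lemma dot3_expand1: "dot3 (x - t *s u) y = dot3 x y - t * dot3 u y"
  by (simp add: dot3_def algebra_simps)

lemma refl_entry: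
  fixes u :: "'k::field_char_0 ^ 3"
  assumes "of_nat m \<noteq> (2::'k)"
  shows "refl_mat m u $ i $ j = (if i = j then 1 else 0) - (2 * u$i / dot3 u u) * u$j"
proof -
  have K: "(4 * (of_nat m - 2)^2 :: 'k) \<noteq> 0" using assms by simp
  have "2 * (4 * (of_nat m - 2)^2 * u$j) / (4 * (of_nat m - 2)^2 * dot3 u u) * u$i
      = (2 * u$i / dot3 u u) * u$j"
    using K by (cases "dot3 u u = 0") (simp_all add: field_simps)
  then show ?thesis unfolding refl_mat_def Qm3 Bm_axis by simp
qed

lemma sum_aux: "(\<Sum>j\<in>UNIV. ((if i = j then 1 else 0) - c * u$j) * x$j) = x$i - c * dot3 x u"
  using exhaust_3[of i] by (auto simp: sum_3 dot3_def algebra_simps)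

lemma refl_apply:
  fixes u :: "'k::field_char_0 ^ 3"
  assumes "of_nat m \<noteq> (2::'k)"
  shows "refl_mat m u *v x = x - (2 * dot3 x u / dot3 u u) *s u"
proof -
  have "(refl_mat m u *v x) $ i = (x - (2 * dot3 x u / dot3 u u) *s u) $ i" for i
  proof -
    have "(refl_mat m u *v x) $ i = (\<Sum>j\<in>UNIV. ((if i = j then 1 else 0) - (2 * u$i / dot3 u u) * u$j) * x$j)"
      by (simp add: matrix_vector_mult_def refl_entry[OF assms])
    also have "\<dots> = x$i - (2 * u$i / dot3 u u) * dot3 x u"
      by (rule sum_aux)
    finally show ?thesis by (simp add: field_simps)
  qed
  then show ?thesis by (simp add: vec_eq_iff)
qed

lemma refl_isometry:
  fixes u :: "'k::field_char_0 ^ 3"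
  assumes "of_nat m \<noteq> (2::'k)" "dot3 u u \<noteq> 0"
  shows "Bm m (refl_mat m u *v x) (refl_mat m u *v y) = Bm m x y"
proof -
  have "dot3 (refl_mat m u *v x) (refl_mat m u *v y) = dot3 x y"
    unfolding refl_apply[OF assms(1)] dot3_expand dot3_sym[of u y]
    using assms(2) by (simp add: field_simps)
  then show ?thesis by (simp add: Bm3)
qed

lemma refl_invol:
  fixes u :: "'k::field_char_0 ^ 3"
  assumes "of_nat m \<noteq> (2::'k)" "dot3 u u \<noteq> 0"
  shows "refl_mat m u *v (refl_mat m u *v x) = x"
proof -
  have "dot3 (x - (2 * dot3 x u / dot3 u u) *s u) u = - dot3 x u"
    unfolding dot3_expand1 using assms(2) by (simp add: field_simps)
  then show ?thesis unfolding refl_apply[OF assms(1)] 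
    by (simp add: vec_eq_iff algebra_simps)
qed

lemma det_rank1: "det (\<chi> i j. (if i = j then 1 else 0) - c$i * u$j :: 'k::comm_ring_1 ^3^3)
  = 1 - (c$1*u$1 + c$2*u$2 + c$3*u$3)"
  unfolding det_3 by (simp add: algebra_simps)

lemma refl_det:
  fixes u :: "'k::field_char_0 ^ 3"
  assumes "of_nat m \<noteq> (2::'k)" "dot3 u u \<noteq> 0"
  shows "det (refl_mat m u) = -1"
proof -
  define c where "c = (\<chi> i. 2 * u$i / dot3 u u)"
  have "refl_mat m u = (\<chi> i j. (if i = j then 1 else 0) - c$i * u$j)"
    by (simp add: vec_eq_iff refl_entry[OF assms(1)] c_def)
  then have "det (refl_mat m u) = 1 - (c$1*u$1 + c$2*u$2 + c$3*u$3)" by (simp add: det_rank1)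
  also have "c$1*u$1 + c$2*u$2 + c$3*u$3 = 2 * dot3 u u * inverse (dot3 u u)"
    unfolding c_def by (simp add: dot3_def divide_inverse algebra_simps)
  also have "\<dots> = 2" using assms(2) by simp
  finally show ?thesis by simp
qed




definition cc :: "nat \<Rightarrow> 'k::field_char_0" where
  "cc m = (4 - of_nat m) / (2 * (of_nat m - 2))"

definition ivec :: "int ^ 3 \<Rightarrow> 'k::field_char_0 ^ 3" where
  "ivec U = (\<chi> i. of_int (U$i))"

definition goodU :: "int ^ 3 \<Rightarrow> bool" where
  "goodU U \<longleftrightarrow> (let S = U$1*U$1 + U$2*U$2 + U$3*U$3; s = U$1 + U$2 + U$3 in
     S \<noteq> 0 \<and> (odd S \<or> (\<exists>p. S = 2 * p \<and> odd p \<and> even s)))"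

lemma dot3_ivec: "dot3 (ivec U) (ivec U) = (of_int (U$1*U$1 + U$2*U$2 + U$3*U$3) :: 'k::field_char_0)"
  by (simp add: dot3_def ivec_def)

lemma nu_cc: "nu m $ i = cc m" by (simp add: nu_def cc_def)

lemma two_half: "2 * (a / (2 * b)) = (a::'k::field_char_0) / b"
  by (cases "b = 0") (simp_all add: field_simps)

context q2m begin

lemma X2_iff: assumes "\<forall>i. odd (d i)"
  shows "x \<in> X2 v m d \<longleftrightarrow> (\<forall>i. x$i - cc m \<in> Z2 v)"
proof
  assume "x \<in> X2 v m d"
  then obtain a where a: "\<forall>i. a i \<in> Z2 v" "x = (\<chi> i. of_nat (d i) * a i) + nu m"
    unfolding X2_def by blast
  show "\<forall>i. x$i - cc m \<in> Z2 v" using a by (simp add: nu_cc Z2_mult Z2_nat)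
next
  assume h: "\<forall>i. x$i - cc m \<in> Z2 v"
  define a where "a i = (x$i - cc m) / of_int (int (d i))" for i
  have dn: "(of_nat (d i) :: 'k) \<noteq> 0" for i using assms by (metis odd_pos of_nat_eq_0_iff not_gr0) 
  have "a i \<in> Z2 v" for i unfolding a_def using assms h by (intro Z2_odd_div) auto
  moreover have "x = (\<chi> i. of_nat (d i) * a i) + nu m"
    using dn by (simp add: vec_eq_iff a_def nu_cc)
  ultimately show "x \<in> X2 v m d" unfolding X2_def by blast
qed

lemma good_refl:
  assumes d: "\<forall>i. odd (d i)" and m: "m \<ge> 3" "odd m" and g: "goodU U" and x: "x \<in> X2 v m d"
  shows "refl_mat m (ivec U) *v x \<in> X2 v m d"
proof -
  define S where "S = U$1*U$1 + U$2*U$2 + U$3*U$3"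
  define s where "s = U$1 + U$2 + U$3"
  have S0: "S \<noteq> 0" using g unfolding goodU_def Let_def S_def by auto
  obtain p where p: "odd p" "\<And>a b. S dvd 2 * a * b * p" "\<And>a. a \<in> {U$1, U$2, U$3} \<Longrightarrow> S dvd s * a * p"
  proof (cases "odd S")
    case True then show ?thesis by (intro that[of S]) auto
  next
    case False
    then obtain q where q: "S = 2 * q" "odd q" "even s" using g unfolding goodU_def Let_def S_def s_def by auto
    then obtain k where k: "s = 2 * k" by blast
    show ?thesis proof (rule that[of q])
      show "S dvd 2 * a * b * q" for a b unfolding q by (simp add: mult_ac)
      show "S dvd s * a * q" for a unfolding q k by (simp add: mult_ac)
    qed (use q in auto)
  qed
  have m2: "of_nat m \<noteq> (2::'k)" using m(1) by (metis numeral_le_iff of_nat_numeral of_nat_eq_iff Suc_n_not_le_n eval_nat_numeral(3) order.refl)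
  have m2': "(of_nat m - 2 :: 'k) \<noteq> 0" using m2 by simp
  have dd: "dot3 (ivec U) (ivec U) = (of_int S :: 'k)" by (simp add: dot3_ivec S_def)
  have Sk: "(of_int S :: 'k) \<noteq> 0" using S0 by simp
  have z: "\<forall>i. x$i - cc m \<in> Z2 v" using x X2_iff[OF d] by blast
  define z where "z i = x$i - cc m" for i
  have xz: "x$i = cc m + z i" for i by (simp add: z_def)
  have fr: "(of_int a / of_int S :: 'k) \<in> Z2 v" if "S dvd a * p" for a
    using Z2_frac[OF p(1) S0 that] .
  have gam: "2 * cc m \<in> Z2 v"
  proof -
    have "(2 * cc m :: 'k) = (4 - of_nat m) / (of_nat m - 2)"
      unfolding cc_def by (rule two_half)
    also have "\<dots> = of_int (4 - int m) / of_int (int m - 2)" by simp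
    finally have eq: "(2 * cc m :: 'k) = of_int (4 - int m) / of_int (int m - 2)" .
    have "odd (int m - 2)" using m(2) by simp
    then have "(of_int (4 - int m) / of_int (int m - 2) :: 'k) \<in> Z2 v" by (rule Z2_odd_div[OF _ Z2_int])
    then show ?thesis unfolding eq .
  qed
  have "(refl_mat m (ivec U) *v x)$i - cc m \<in> Z2 v" for i
  proof -
    have e: "(refl_mat m (ivec U) *v x)$i - cc m =
      z i - (2 * cc m) * (of_int (s * U$i) / of_int S)
          - (of_int (2 * U$1 * U$i) / of_int S) * z 1
          - (of_int (2 * U$2 * U$i) / of_int S) * z 2
          - (of_int (2 * U$3 * U$i) / of_int S) * z 3"
      unfolding refl_apply[OF m2] dd using Sk
      by (simp add: xz dot3_def ivec_def s_def field_simps)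
    have f1: "(of_int (s * U$i) / of_int S :: 'k) \<in> Z2 v"
      using exhaust_3[of i] by (intro fr p(3)) auto
    have f2: "(of_int (2 * U$j * U$i) / of_int S :: 'k) \<in> Z2 v" for j
      by (intro fr p(2))
    have zz: "z j \<in> Z2 v" for j using z by (simp add: z_def)
    show ?thesis unfolding e
      by (intro Z2_diff[OF Z2_diff[OF Z2_diff[OF Z2_diff[OF zz Z2_mult[OF gam f1]] Z2_mult[OF f2 zz]] Z2_mult[OF f2 zz]] Z2_mult[OF f2 zz]])
  qed
  then show ?thesis using X2_iff[OF d] by blast
qed

end



definition SQ :: "int ^ 3 \<Rightarrow> int" where "SQ U = U$1*U$1 + U$2*U$2 + U$3*U$3"

lemma goodU_odd: assumes h: "odd (SQ U)" shows "goodU U"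
proof -
  have "SQ U \<noteq> 0" using h by auto
  then show ?thesis using h unfolding goodU_def Let_def SQ_def by blast
qed

lemma goodU_even: assumes h: "SQ U = 2 * p" "odd p" "even (U$1 + U$2 + U$3)" shows "goodU U"
proof -
  have "SQ U \<noteq> 0" using h by auto
  then show ?thesis using h unfolding goodU_def Let_def SQ_def by blast
qed

lemma goodU_ne: "goodU U \<Longrightarrow> SQ U \<noteq> 0"
  unfolding goodU_def Let_def SQ_def by meson

lemma m2_lemma: "m \<ge> 3 \<Longrightarrow> of_nat m \<noteq> (2::'k::field_char_0)"
proof
  assume "m \<ge> 3" "of_nat m = (2::'k)"
  then have "of_nat m = (of_nat 2 :: 'k)" by simp
  then have "m = 2" using of_nat_eq_iff by blast
  then show False using \<open>m \<ge> 3\<close> by simp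
qed

context q2m begin

lemma id_in:
  assumes "y \<noteq> 0"
  shows "y^2 \<in> spinor_norm_preimage m (Oplus_X v m d)"
proof -
  have "mat 1 \<in> Oplus_X v m d" unfolding Oplus_X_def Oplus_def by simp
  moreover have "mat 1 = foldr (\<lambda>u M. refl_mat m u ** M) ([] :: ('k^3) list) (mat 1)" by simp
  moreover have "y^2 = (\<Prod>u\<leftarrow>([] :: ('k^3) list). Qm m u) * y^2" by simp
  ultimately show ?thesis unfolding spinor_norm_preimage_def using assms
    by (intro CollectI bexI[of _ "mat 1"] exI[of _ "[]"] exI[of _ y]) auto
qed

lemma pair_in:
  assumes d: "\<forall>i. odd (d i)" and m: "m \<ge> 3" "odd m"
    and gU: "goodU U" and gW: "goodU W" and y: "y \<noteq> 0"
  shows "of_int (SQ U * SQ W) * y^2 \<in> spinor_norm_preimage m (Oplus_X v m d)"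
proof -
  define u :: "'k^3" where "u = ivec U"
  define w :: "'k^3" where "w = ivec W"
  have m2: "of_nat m \<noteq> (2::'k)" using m2_lemma m(1) by blast
  have du: "dot3 u u = of_int (SQ U)" unfolding u_def SQ_def by (rule dot3_ivec)
  have dw: "dot3 w w = of_int (SQ W)" unfolding w_def SQ_def by (rule dot3_ivec)
  have u0: "dot3 u u \<noteq> 0" using goodU_ne[OF gU] unfolding du by simp
  have w0: "dot3 w w \<noteq> 0" using goodU_ne[OF gW] unfolding dw by simp
  define Ru where "Ru = refl_mat m u"
  define Rw where "Rw = refl_mat m w"
  define A where "A = Ru ** (Rw ** mat 1)"
  have Ax: "A *v x = Ru *v (Rw *v x)" for x unfolding A_def by (simp add: matrix_vector_mul_assoc)
  have pu: "Ru *v x \<in> X2 v m d" if "x \<in> X2 v m d" for x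
    unfolding Ru_def u_def using good_refl[OF d m gU that] .
  have pw: "Rw *v x \<in> X2 v m d" if "x \<in> X2 v m d" for x
    unfolding Rw_def w_def using good_refl[OF d m gW that] .
  have iu: "Ru *v (Ru *v x) = x" for x unfolding Ru_def by (rule refl_invol[OF m2 u0])
  have iw: "Rw *v (Rw *v x) = x" for x unfolding Rw_def by (rule refl_invol[OF m2 w0])
  have "A \<in> Oplus m"
  proof -
    have "Bm m (A *v x) (A *v y) = Bm m x y" for x y
      unfolding Ax Ru_def Rw_def by (simp add: refl_isometry[OF m2 u0] refl_isometry[OF m2 w0])
    moreover have "det A = 1" unfolding A_def Ru_def Rw_def
      by (simp add: det_mul refl_det[OF m2 u0] refl_det[OF m2 w0])
    ultimately show ?thesis unfolding Oplus_def by blast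
  qed
  moreover have "(\<lambda>x. A *v x) ` X2 v m d = X2 v m d"
  proof
    show "(\<lambda>x. A *v x) ` X2 v m d \<subseteq> X2 v m d" unfolding Ax using pu pw by auto
    show "X2 v m d \<subseteq> (\<lambda>x. A *v x) ` X2 v m d"
    proof
      fix x assume "x \<in> X2 v m d"
      then have "Rw *v (Ru *v x) \<in> X2 v m d" using pu pw by blast
      moreover have "x = A *v (Rw *v (Ru *v x))" unfolding Ax iw iu ..
      ultimately show "x \<in> (\<lambda>x. A *v x) ` X2 v m d" by blast
    qed
  qed
  ultimately have AX: "A \<in> Oplus_X v m d" unfolding Oplus_X_def by blast
  define K :: 'k where "K = 4 * (of_nat m - 2)^2"
  have K0: "K \<noteq> 0" using m2 by (simp add: K_def)
  have "of_int (SQ U * SQ W) * y^2 = (\<Prod>z\<leftarrow>[u, w]. Qm m z) * (y / K)^2"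
  proof -
    have Qu: "Qm m u = K * of_int (SQ U)" by (simp add: Qm3 du K_def)
    have Qw: "Qm m w = K * of_int (SQ W)" by (simp add: Qm3 dw K_def)
    show ?thesis using K0 by (simp add: Qu Qw field_simps power2_eq_square)
  qed
  moreover have "A = foldr (\<lambda>u M. refl_mat m u ** M) [u, w] (mat 1)"
    by (simp add: A_def Ru_def Rw_def)
  moreover have "\<forall>z\<in>set [u, w]. Qm m z \<noteq> 0" using Qm_ne[OF m2] u0 w0 by auto
  moreover have "y / K \<noteq> 0" using y K0 by simp
  ultimately show ?thesis unfolding spinor_norm_preimage_def using AX by blast
qed

end



theorem proposition4p2:
  fixes v :: "'k::field_char_0 \<Rightarrow> int" and m :: nat and d :: "3 \<Rightarrow> nat"
  assumes "Q2_model v"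
    and "m \<ge> 3" and "odd m"
    and "\<forall>i. squarefree_odd (d i)"
  shows "spinor_norm_preimage m (Oplus_X v m d) = {a * s^2 | a s. a \<in> Z2 v \<and> a \<noteq> 0 \<and> s \<noteq> 0}"
proof -
  interpret q2m v using assms(1) by (rule q2m.intro)
  have d: "\<forall>i. odd (d i)" using assms(4) unfolding squarefree_odd_def by blast
  define LHS where "LHS = spinor_norm_preimage m (Oplus_X v m d)"
  have P: "of_int (SQ U * SQ W) * y^2 \<in> LHS" if "goodU U" "goodU W" "y \<noteq> 0" for U W and y :: 'k
    unfolding LHS_def using pair_in[OF d assms(2,3) that] .
  define e1 :: "int^3" where "e1 = vector [1,0,0]"
  have e1: "goodU e1" "SQ e1 = 1" by (auto simp: e1_def SQ_def intro!: goodU_odd)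
  have cls: "of_int c * y^2 \<in> LHS" if c: "c \<in> {1,2,3,5,6,7,10,14::int}" and y: "y \<noteq> 0" for c and y :: 'k
  proof -
    consider "c = 1" | "c = 2" | "c = 3" | "c = 5" | "c = 6" | "c = 7" | "c = 10" | "c = 14" using c by auto
    then show ?thesis
    proof cases
      case 1 then show ?thesis using id_in[OF y] unfolding LHS_def by simp
    next
      case 2
      define U :: "int^3" where "U = vector [1,1,0]"
      have "goodU U" "SQ U = 2" by (auto simp: U_def SQ_def intro!: goodU_even[of _ 1])
      then show ?thesis using P[OF _ e1(1) y, of U] e1(2) 2 by simp
    next
      case 3
      define U :: "int^3" where "U = vector [1,1,1]"
      have "goodU U" "SQ U = 3" by (auto simp: U_def SQ_def intro!: goodU_odd)
      then show ?thesis using P[OF _ e1(1) y, of U] e1(2) 3 by simp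
    next
      case 4
      define U :: "int^3" where "U = vector [1,2,0]"
      have "goodU U" "SQ U = 5" by (auto simp: U_def SQ_def intro!: goodU_odd)
      then show ?thesis using P[OF _ e1(1) y, of U] e1(2) 4 by simp
    next
      case 5
      define U :: "int^3" where "U = vector [1,1,2]"
      have "goodU U" "SQ U = 6" by (auto simp: U_def SQ_def intro!: goodU_even[of _ 3])
      then show ?thesis using P[OF _ e1(1) y, of U] e1(2) 5 by simp
    next
      case 6
      define U :: "int^3" where "U = vector [4,2,1]"
      define W :: "int^3" where "W = vector [1,1,1]"
      have "goodU U" "SQ U = 21" by (auto simp: U_def SQ_def intro!: goodU_odd)
      moreover have "goodU W" "SQ W = 3" by (auto simp: W_def SQ_def intro!: goodU_odd)
      moreover have "y / 3 \<noteq> 0" using y by simp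
      ultimately have "of_int (21 * 3) * (y / 3)^2 \<in> LHS" using P[of U W "y/3"] by simp
      moreover have "(of_int (21 * 3) * (y / 3)^2 :: 'k) = of_int c * y^2" using 6
        by (simp add: power2_eq_square)
      ultimately show ?thesis by simp
    next
      case 7
      define U :: "int^3" where "U = vector [1,3,0]"
      have "goodU U" "SQ U = 10" by (auto simp: U_def SQ_def intro!: goodU_even[of _ 5])
      then show ?thesis using P[OF _ e1(1) y, of U] e1(2) 7 by simp
    next
      case 8
      define U :: "int^3" where "U = vector [1,2,3]"
      have "goodU U" "SQ U = 14" by (auto simp: U_def SQ_def intro!: goodU_even[of _ 7])
      then show ?thesis using P[OF _ e1(1) y, of U] e1(2) 8 by simp
    qed
  qed
  show ?thesis unfolding LHS_def[symmetric]
  proof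
    show "LHS \<subseteq> {a * s^2 | a s. a \<in> Z2 v \<and> a \<noteq> 0 \<and> s \<noteq> 0}"
    proof
      fix q assume "q \<in> LHS"
      then obtain us :: "('k^3) list" and s where us: "\<forall>u\<in>set us. Qm m u \<noteq> 0" "s \<noteq> 0"
        "q = (\<Prod>u\<leftarrow>us. Qm m u) * s^2"
        unfolding LHS_def spinor_norm_preimage_def by blast
      have "(\<Prod>u\<leftarrow>us. Qm m u) \<noteq> 0" using us(1) by (auto simp: prod_list_zero_iff)
      then have "q \<noteq> 0" using us by simp
      then obtain c y where cy: "c \<in> {1,2,3,5,6,7,10,14::int}" "y \<noteq> 0" "q = of_int c * y^2"
        using classify by blast
      have "(of_int c :: 'k) \<noteq> 0" using cy(1) by auto
      then show "q \<in> {a * s^2 | a s. a \<in> Z2 v \<and> a \<noteq> 0 \<and> s \<noteq> 0}"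
        using cy Z2_int[of c] by blast
    qed
    show "{a * s^2 | a s. a \<in> Z2 v \<and> a \<noteq> 0 \<and> s \<noteq> 0} \<subseteq> LHS"
    proof
      fix q assume "q \<in> {a * s^2 | a s. a \<in> Z2 v \<and> a \<noteq> 0 \<and> s \<noteq> 0}"
      then have "q \<noteq> 0" by auto
      then obtain c y where cy: "c \<in> {1,2,3,5,6,7,10,14::int}" "y \<noteq> 0" "q = of_int c * y^2"
        using classify by blast
      then show "q \<in> LHS" using cls by blast
    qed
  qed
qed



end
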